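(* Let $F(q,x)=\sum_{n\ge0}\sum_{\gamma\in\mathcal{D}_n} q^{\#duu(\gamma)}x^n$ and $V(q,x)=\sum_{n\ge0}\sum_{\gamma\in\mathcal{D}_n} q^{\#du(\gamma)}x^n$, where $\#w(\gamma)$ is the number of occurrences of the factor $w$ in $\gamma$ (so $\#du(\gamma)$ is the number of valleys). Let $SC_2(x)=\sum_{n\ge0} sc_2(\mathcal{D}_n)x^n$, where $sc_2(\mathcal{D}_n)$ is the number of saturated chains of length 2 in $\mathcal{D}_n$. Then $$ SC_2(x)=2\left[\frac{\partial F}{\partial q}\right]_{q=1}+\left[\frac{\partial^2 V}{\partial q^2}\right]_{q=1}. $$
   Context: A Dyck path of semilength $n$ is a lattice path from $(0,0)$ to $(2n,0)$ with steps $u=(1,1)$ and $d=(1,-1)$ never going below the $x$-axis, identified with a word over $\{u,d\}$. $\mathcal{D}_n$ is the set of Dyck paths of semilength $n$ ordered by containment: $\gamma\le\gamma'$ iff $\gamma$ lies weakly below $\gamma'$. A saturated chain of length $h$ is a sequence $\gamma^{(0)}<\cdots<\gamma^{(h)}$ in which each element covers the previous one. *)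

theory Defs
  imports "HOL-Computational_Algebra.Polynomial" "HOL-Computational_Algebra.Formal_Power_Series"
begin

text \<open>Dyck paths are words over {u,d}; we encode u as True and d as False.\<close>

definition ustep :: bool where "ustep = True"
definition dstep :: bool where "dstep = False"

definition height :: "bool list \<Rightarrow> nat \<Rightarrow> int" where
  "height w i = (\<Sum>s\<leftarrow>take i w. if s then 1 else -1)"

definition dyck_paths :: "nat \<Rightarrow> bool list set" where
  "dyck_paths n = {w. length w = 2 * n \<and> (\<forall>i\<le>length w. height w i \<ge> 0)
                      \<and> height w (length w) = 0}"

definition path_le :: "bool list \<Rightarrow> bool list \<Rightarrow> bool" where
  "path_le g g' \<longleftrightarrow> length g = length g' \<and> (\<forall>i\<le>length g. height g i \<le> height g' i)"

definition path_lt :: "bool list \<Rightarrow> bool list \<Rightarrow> bool" where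
  "path_lt g g' \<longleftrightarrow> path_le g g' \<and> g \<noteq> g'"

definition covers_in :: "nat \<Rightarrow> bool list \<Rightarrow> bool list \<Rightarrow> bool" where
  "covers_in n g g' \<longleftrightarrow> g \<in> dyck_paths n \<and> g' \<in> dyck_paths n \<and> path_lt g g' \<and>
     \<not> (\<exists>h\<in>dyck_paths n. path_lt g h \<and> path_lt h g')"

definition sc2 :: "nat \<Rightarrow> nat" where
  "sc2 n = card {(a, b, c). a \<in> dyck_paths n \<and> b \<in> dyck_paths n \<and> c \<in> dyck_paths n
                 \<and> covers_in n a b \<and> covers_in n b c}"

definition occ :: "bool list \<Rightarrow> bool list \<Rightarrow> nat" where
  "occ w g = card {i. i + length w \<le> length g \<and> take (length w) (drop i g) = w}"

text \<open>Bivariate generating functions: power series in x with polynomial coefficients in q.\<close>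
definition F_gf :: "real poly fps" where
  "F_gf = Abs_fps (\<lambda>n. \<Sum>g\<in>dyck_paths n. monom 1 (occ [dstep, ustep, ustep] g))"

definition V_gf :: "real poly fps" where
  "V_gf = Abs_fps (\<lambda>n. \<Sum>g\<in>dyck_paths n. monom 1 (occ [dstep, ustep] g))"

definition SC2_gf :: "real fps" where
  "SC2_gf = Abs_fps (\<lambda>n. real (sc2 n))"

definition dq :: "real poly fps \<Rightarrow> real poly fps" where
  "dq A = Abs_fps (\<lambda>n. pderiv (fps_nth A n))"

definition at_q1 :: "real poly fps \<Rightarrow> real fps" where
  "at_q1 A = Abs_fps (\<lambda>n. poly (fps_nth A n) 1)"

end

theory Submission imports Defs begin

lemma height_0[simp]: "height w 0 = 0" by (simp add: height_def)

lemma height_Suc: "height w (Suc j) = height w j + (if j < length w then (if w!j then 1 else -1) else 0)"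
proof (cases "j < length w")
  case True
  then show ?thesis by (simp add: height_def take_Suc_conv_app_nth)
next
  case False
  then show ?thesis by (simp add: height_def)
qed

lemma height_ge: "j \<ge> length w \<Longrightarrow> height w j = height w (length w)"
  by (simp add: height_def)

lemma height_parity: "j \<le> length w \<Longrightarrow> height w j mod 2 = int j mod 2"
proof (induction j)
  case 0 then show ?case by simp
next
  case (Suc j)
  then have "height w j mod 2 = int j mod 2" by simp
  moreover have "Suc j \<le> length w" using Suc.prems .
  ultimately have h: "height w j mod 2 = int j mod 2" "height w (Suc j) = height w j + (if w!j then 1 else -1)"
    by (simp_all add: height_Suc)
  show ?case using h by (cases "w!j") (simp_all, presburger+)
qed

lemma nth_by_height: "i < length w \<Longrightarrow> w!i \<longleftrightarrow> height w (Suc i) > height w i"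
  by (simp add: height_Suc)

lemma eq_by_height:
  assumes "length g = length h" "\<forall>i\<le>length g. height g i = height h i"
  shows "g = h"
proof (rule nth_equalityI)
  show "length g = length h" by fact
  fix i assume "i < length g"
  then show "g!i = h!i" using assms nth_by_height[of i g] nth_by_height[of i h]
    by (metis Suc_leI less_imp_le)
qed

definition valley :: "bool list \<Rightarrow> nat \<Rightarrow> bool" where
  "valley a i \<longleftrightarrow> Suc i < length a \<and> \<not> a!i \<and> a!(Suc i)"

definition flip :: "bool list \<Rightarrow> nat \<Rightarrow> bool list" where
  "flip a i = a[i := True, Suc i := False]"

lemma length_flip[simp]: "length (flip a i) = length a" by (simp add: flip_def)

lemma height_flip:
  assumes "valley a i"
  shows "height (flip a i) j = height a j + (if j = Suc i then 2 else 0)"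
proof (induction j)
  case 0 then show ?case by simp
next
  case (Suc j)
  show ?case
  proof (cases "j = i")
    case True with assms Suc show ?thesis by (simp add: height_Suc flip_def valley_def)
  next
    case F1: False
    show ?thesis
    proof (cases "j = Suc i")
      case True with assms Suc show ?thesis by (simp add: height_Suc flip_def valley_def)
    next
      case False with F1 assms Suc show ?thesis by (simp add: height_Suc flip_def valley_def)
    qed
  qed
qed


lemma flip_dyck: assumes "a \<in> dyck_paths n" "valley a i" shows "flip a i \<in> dyck_paths n"
proof -
  have "Suc i < length a" using assms(2) by (simp add: valley_def)
  then show ?thesis using assms by (auto simp: dyck_paths_def height_flip)
qed

lemma flip_ne: "valley a i \<Longrightarrow> flip a i \<noteq> a"
  using height_flip[of a i "Suc i"] by auto

lemma flip_le: "valley a i \<Longrightarrow> path_le a (flip a i)"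
  by (simp add: path_le_def height_flip)

lemma flip_cover: assumes "a \<in> dyck_paths n" "valley a i" shows "covers_in n a (flip a i)"
  unfolding covers_in_def
proof (intro conjI)
  show "a \<in> dyck_paths n" "flip a i \<in> dyck_paths n" using assms flip_dyck by auto
  show "path_lt a (flip a i)" using assms flip_ne flip_le path_lt_def by metis
  show "\<not> (\<exists>h\<in>dyck_paths n. path_lt a h \<and> path_lt h (flip a i))"
  proof
    assume "\<exists>h\<in>dyck_paths n. path_lt a h \<and> path_lt h (flip a i)"
    then obtain h where h: "h \<in> dyck_paths n" "path_lt a h" "path_lt h (flip a i)" by blast
    have len: "length h = length a" using h(2) by (simp add: path_lt_def path_le_def)
    have lo: "\<forall>j\<le>length a. height a j \<le> height h j" using h(2) by (simp add: path_lt_def path_le_def)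
    have hi: "\<forall>j\<le>length a. height h j \<le> height a j + (if j = Suc i then 2 else 0)"
      using h(3) assms(2) len by (simp add: path_lt_def path_le_def height_flip)
    have si: "Suc i \<le> length a" using assms(2) by (simp add: valley_def)
    have p1: "height h (Suc i) mod 2 = height a (Suc i) mod 2"
      using height_parity[of "Suc i" h] height_parity[of "Suc i" a] si len by simp
    have "height h (Suc i) = height a (Suc i) \<or> height h (Suc i) = height a (Suc i) + 2"
      proof -
      have "height a (Suc i) \<le> height h (Suc i)" "height h (Suc i) \<le> height a (Suc i) + 2"
        using lo hi si by auto
      then show ?thesis using p1 by presburger
    qed
    then show False
    proof
      assume e: "height h (Suc i) = height a (Suc i)"
      have "h = a"
      proof (rule eq_by_height)
        show "length h = length a" by fact
        show "\<forall>j\<le>length h. height h j = height a j"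
        proof (intro allI impI)
          fix j assume "j \<le> length h"
          then have "height a j \<le> height h j" "height h j \<le> height a j + (if j = Suc i then 2 else 0)"
            using len lo hi by auto
          then show "height h j = height a j" using e
            by (cases "j = Suc i") auto
        qed
      qed
      then show False using h(2) by (simp add: path_lt_def)
    next
      assume e: "height h (Suc i) = height a (Suc i) + 2"
      have "h = flip a i"
      proof (rule eq_by_height)
        show "length h = length (flip a i)" using len by simp
        show "\<forall>j\<le>length h. height h j = height (flip a i) j"
        proof (intro allI impI)
          fix j assume "j \<le> length h"
          then have "height a j \<le> height h j" "height h j \<le> height a j + (if j = Suc i then 2 else 0)"
            using len lo hi by auto
          then show "height h j = height (flip a i) j" using e assms(2)
            by (cases "j = Suc i") (auto simp: height_flip)
        qed
      qed
      then show False using h(3) by (simp add: path_lt_def)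
    qed
  qed
qed


lemma exists_valley:
  assumes a: "a \<in> dyck_paths n" and b: "b \<in> dyck_paths n" and lt: "path_lt a b"
  shows "\<exists>i. valley a i \<and> path_le (flip a i) b"
proof -
  have len: "length b = length a" and le: "\<forall>j\<le>length a. height a j \<le> height b j"
    using lt by (auto simp: path_lt_def path_le_def)
  define S where "S = {j. j \<le> length a \<and> height a j < height b j}"
  have "S \<noteq> {}"
  proof
    assume "S = {}"
    then have "\<forall>j\<le>length a. height a j = height b j" using le by (force simp: S_def)
    then have "a = b" using len eq_by_height[of a b] by (metis)
    then show False using lt by (simp add: path_lt_def)
  qed
  then obtain j0 where "j0 \<in> S" by blast
  from ex_has_least_nat[of "\<lambda>j. j \<in> S", OF this, of "\<lambda>j. nat (height a j)"]
  obtain j where j: "j \<in> S" and jmin: "\<And>k. k \<in> S \<Longrightarrow> nat (height a j) \<le> nat (height a k)" by blast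
  have nonneg: "\<And>k. k \<le> length a \<Longrightarrow> height a k \<ge> 0" using a by (simp add: dyck_paths_def)
  have jmin': "\<And>k. k \<in> S \<Longrightarrow> height a j \<le> height a k"
    using jmin nonneg j by (force simp: S_def)
  have jl: "j \<le> length a" and jlt: "height a j < height b j" using j by (auto simp: S_def)
  have "j \<noteq> 0" using jlt by (metis height_0 less_irrefl)
  moreover have "j \<noteq> length a"
  proof -
    have "height a (length a) = 0" using a unfolding dyck_paths_def by blast
    moreover have "height b (length b) = 0" using b unfolding dyck_paths_def by blast
    ultimately show ?thesis using jlt len by auto
  qed
  ultimately have j1: "0 < j" "j < length a" using jl by auto
  have par: "height a j mod 2 = height b j mod 2"
    using height_parity[of j a] height_parity[of j b] jl len by simp
  have two: "height a j + 2 \<le> height b j" using jlt par by presburger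
  define p where "p = j - 1"
  have jp: "j = Suc p" using j1 by (simp add: p_def)
  have stepa: "height a j = height a p + (if a!p then 1 else -1)"
    using jp j1 by (simp add: height_Suc)
  have stepb: "height b j \<le> height b p + 1"
    using jp j1 len by (simp add: height_Suc)
  have ap: "\<not> a!p"
  proof
    assume "a!p"
    then have "p \<in> S" using stepa stepb two jp jl by (simp add: S_def)
    then have "height a j \<le> height a p" by (rule jmin')
    then show False using stepa \<open>a!p\<close> by simp
  qed
  have stepa2: "height a (Suc j) = height a j + (if a!j then 1 else -1)"
    using j1 by (simp add: height_Suc)
  have stepb2: "height b (Suc j) \<ge> height b j - 1"
    using j1 len by (simp add: height_Suc)
  have aj: "a!j"
  proof (rule ccontr)
    assume "\<not> a!j"
    then have "Suc j \<in> S" using stepa2 stepb2 two j1 by (simp add: S_def)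
    then have "height a j \<le> height a (Suc j)" by (rule jmin')
    then show False using stepa2 \<open>\<not> a!j\<close> by simp
  qed
  have v: "valley a p" using ap aj jp j1 by (simp add: valley_def)
  have "path_le (flip a p) b"
    unfolding path_le_def
  proof (intro conjI allI impI)
    show "length (flip a p) = length b" using len by simp
    fix k assume "k \<le> length (flip a p)"
    then show "height (flip a p) k \<le> height b k"
      using le two jp v by (auto simp: height_flip)
  qed
  with v show ?thesis by blast
qed

lemma cover_char: "covers_in n a b \<longleftrightarrow> a \<in> dyck_paths n \<and> (\<exists>i. valley a i \<and> b = flip a i)"
proof
  assume c: "covers_in n a b"
  then have a: "a \<in> dyck_paths n" and b: "b \<in> dyck_paths n" and lt: "path_lt a b"
    and nm: "\<not> (\<exists>h\<in>dyck_paths n. path_lt a h \<and> path_lt h b)"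
    by (auto simp: covers_in_def)
  obtain i where v: "valley a i" and fl: "path_le (flip a i) b" using exists_valley[OF a b lt] by blast
  have "flip a i = b"
  proof (rule ccontr)
    assume "flip a i \<noteq> b"
    then have "path_lt (flip a i) b" using fl by (simp add: path_lt_def)
    moreover have "path_lt a (flip a i)" using v flip_ne flip_le path_lt_def by metis
    ultimately show False using nm flip_dyck[OF a v] by blast
  qed
  then show "a \<in> dyck_paths n \<and> (\<exists>i. valley a i \<and> b = flip a i)" using a v by blast
next
  assume "a \<in> dyck_paths n \<and> (\<exists>i. valley a i \<and> b = flip a i)"
  then show "covers_in n a b" using flip_cover by blast
qed


definition vset :: "bool list \<Rightarrow> nat set" where "vset a = {i. valley a i}"

lemma finite_vset[simp]: "finite (vset a)"
  by (rule finite_subset[of _ "{..<length a}"]) (auto simp: vset_def valley_def)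

lemma finite_dyck[simp]: "finite (dyck_paths n)"
  by (rule finite_subset[of _ "{w. set w \<subseteq> UNIV \<and> length w = 2*n}"])
     (use finite_lists_length_eq[of "UNIV :: bool set" "2*n"] in \<open>auto simp: dyck_paths_def\<close>)

lemma triples_eq:
  "{(a, b, c). a \<in> dyck_paths n \<and> b \<in> dyck_paths n \<and> c \<in> dyck_paths n
                 \<and> covers_in n a b \<and> covers_in n b c}
   = Sigma (dyck_paths n) (\<lambda>a. Sigma (flip a ` vset a) (\<lambda>b. flip b ` vset b))"
  by (auto simp: cover_char vset_def flip_dyck)

lemma inj_flip: "inj_on (flip a) (vset a)"
proof
  fix i k assume i: "i \<in> vset a" and k: "k \<in> vset a" and e: "flip a i = flip a k"
  have "flip a i ! i" using i by (simp add: vset_def valley_def flip_def)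
  moreover have "flip a k ! i \<longleftrightarrow> i = k" using i k
    by (auto simp: vset_def valley_def flip_def nth_list_update)
  ultimately show "i = k" using e by simp
qed

lemma sc2_sum: "sc2 n = (\<Sum>a\<in>dyck_paths n. \<Sum>i\<in>vset a. card (vset (flip a i)))"
proof -
  have "sc2 n = (\<Sum>a\<in>dyck_paths n. card (Sigma (flip a ` vset a) (\<lambda>b. flip b ` vset b)))"
    unfolding sc2_def triples_eq by (simp add: card_SigmaI)
  also have "\<dots> = (\<Sum>a\<in>dyck_paths n. \<Sum>i\<in>vset a. card (vset (flip a i)))"
  proof (rule sum.cong[OF refl])
    fix a
    have "card (Sigma (flip a ` vset a) (\<lambda>b. flip b ` vset b)) = (\<Sum>b\<in>flip a ` vset a. card (flip b ` vset b))"
      by (simp add: card_SigmaI)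
    also have "\<dots> = (\<Sum>b\<in>flip a ` vset a. card (vset b))"
      by (simp add: card_image inj_flip)
    also have "\<dots> = (\<Sum>i\<in>vset a. card (vset (flip a i)))"
      by (simp add: sum.reindex inj_flip)
    finally show "card (Sigma (flip a ` vset a) (\<lambda>b. flip b ` vset b)) = (\<Sum>i\<in>vset a. card (vset (flip a i)))" .
  qed
  finally show ?thesis .
qed

definition lft :: "bool list \<Rightarrow> nat \<Rightarrow> bool" where "lft a i \<longleftrightarrow> 0 < i \<and> \<not> a!(i-1)"
definition rgt :: "bool list \<Rightarrow> nat \<Rightarrow> bool" where "rgt a i \<longleftrightarrow> Suc (Suc i) < length a \<and> a!(Suc (Suc i))"

lemma vset_flip:
  assumes v: "valley a i"
  shows "vset (flip a i) = (vset a - {i}) \<union> (if lft a i then {i-1} else {}) \<union> (if rgt a i then {Suc i} else {})"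
proof (rule set_eqI)
  fix k
  show "k \<in> vset (flip a i) \<longleftrightarrow> k \<in> (vset a - {i}) \<union> (if lft a i then {i-1} else {}) \<union> (if rgt a i then {Suc i} else {})"
    using v by (cases "k < i - 1"; cases "k = i - 1"; cases "k = i"; cases "k = Suc i")
     (auto simp: vset_def valley_def flip_def nth_list_update lft_def rgt_def)
qed


lemma card_vset_flip:
  assumes v: "valley a i"
  shows "card (vset (flip a i)) = (card (vset a) - 1) + (if lft a i then 1 else 0) + (if rgt a i then 1 else 0)"
proof -
  have iv: "i \<in> vset a" using v by (simp add: vset_def)
  have d1: "(vset a - {i}) \<inter> (if lft a i then {i-1} else {}) = {}"
    using v by (auto simp: vset_def valley_def lft_def)
  have d2: "((vset a - {i}) \<union> (if lft a i then {i-1} else {})) \<inter> (if rgt a i then {Suc i} else {}) = {}"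
    using v by (auto simp: vset_def valley_def lft_def rgt_def)
  show ?thesis
    unfolding vset_flip[OF v]
    by (simp add: card_Un_disjoint[OF _ _ d2] card_Un_disjoint[OF _ _ d1] card_Diff_singleton iv)
qed

lemma sum_if_card: "finite A \<Longrightarrow> (\<Sum>i\<in>A. (if P i then 1 else 0) :: nat) = card {i\<in>A. P i}"
  by (simp add: sum.If_cases Int_def conj_commute)

lemma inner_sum:
  "(\<Sum>i\<in>vset a. card (vset (flip a i))) =
     card (vset a) * (card (vset a) - 1) + card {i\<in>vset a. lft a i} + card {i\<in>vset a. rgt a i}"
proof -
  have "(\<Sum>i\<in>vset a. card (vset (flip a i))) =
     (\<Sum>i\<in>vset a. (card (vset a) - 1) + (if lft a i then 1 else 0) + (if rgt a i then 1 else 0))"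
  proof (rule sum.cong[OF refl])
    fix i assume "i \<in> vset a"
    then have "valley a i" by (simp add: vset_def)
    then show "card (vset (flip a i)) = (card (vset a) - 1) + (if lft a i then 1 else 0) + (if rgt a i then 1 else 0)"
      by (rule card_vset_flip)
  qed
  also have "\<dots> = card (vset a) * (card (vset a) - 1) + card {i\<in>vset a. lft a i} + card {i\<in>vset a. rgt a i}"
    by (simp add: sum.distrib sum_if_card)
  finally show ?thesis .
qed


lemma take2: "i + 2 \<le> length g \<Longrightarrow> take 2 (drop i g) = [g!i, g!Suc i]"
  by (simp add: Cons_nth_drop_Suc[symmetric] numeral_2_eq_2)

lemma take3: "i + 3 \<le> length g \<Longrightarrow> take 3 (drop i g) = [g!i, g!Suc i, g!Suc (Suc i)]"
  by (simp add: Cons_nth_drop_Suc[symmetric] numeral_3_eq_3)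

lemma take2': "Suc (Suc i) \<le> length g \<Longrightarrow> take (Suc (Suc 0)) (drop i g) = [g!i, g!Suc i]"
  using take2[of i g] by (simp add: numeral_2_eq_2)

lemma take3': "Suc (Suc (Suc i)) \<le> length g \<Longrightarrow> take (Suc (Suc (Suc 0))) (drop i g) = [g!i, g!Suc i, g!Suc (Suc i)]"
  using take3[of i g] by (simp add: numeral_3_eq_3)

lemma occ_du: "occ [dstep, ustep] g = card (vset g)"
proof -
  have "{i. i + length [dstep, ustep] \<le> length g \<and> take (length [dstep, ustep]) (drop i g) = [dstep, ustep]} = vset g"
    by (auto simp: take2' vset_def valley_def dstep_def ustep_def)
  then show ?thesis by (simp add: occ_def)
qed

definition duu_set where "duu_set a = {k. k + 3 \<le> length a \<and> \<not> a!k \<and> a!Suc k \<and> a!Suc (Suc k)}"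
definition ddu_set where "ddu_set a = {k. k + 3 \<le> length a \<and> \<not> a!k \<and> \<not> a!Suc k \<and> a!Suc (Suc k)}"

lemma occ_duu: "occ [dstep, ustep, ustep] g = card (duu_set g)"
proof -
  have "{i. i + length [dstep, ustep, ustep] \<le> length g \<and> take (length [dstep, ustep, ustep]) (drop i g) = [dstep, ustep, ustep]} = duu_set g"
    by (auto simp: take3' duu_set_def dstep_def ustep_def)
  then show ?thesis by (simp add: occ_def)
qed

lemma rgt_card: "card {i\<in>vset a. rgt a i} = card (duu_set a)"
proof -
  have "{i\<in>vset a. rgt a i} = duu_set a"
    by (auto simp: vset_def valley_def rgt_def duu_set_def)
  then show ?thesis by simp
qed

lemma lft_card: "card {i\<in>vset a. lft a i} = card (ddu_set a)"
proof -
  have "{i\<in>vset a. lft a i} = Suc ` ddu_set a"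
  proof (rule set_eqI)
    fix i show "i \<in> {i\<in>vset a. lft a i} \<longleftrightarrow> i \<in> Suc ` ddu_set a"
      by (cases i) (auto simp: vset_def valley_def lft_def ddu_set_def)
  qed
  then show ?thesis by (simp add: card_image)
qed


definition rc :: "bool list \<Rightarrow> bool list" where "rc a = rev (map Not a)"

lemma rc_rc[simp]: "rc (rc a) = a" by (simp add: rc_def rev_map comp_def)
lemma length_rc[simp]: "length (rc a) = length a" by (simp add: rc_def)
lemma rc_nth: "k < length a \<Longrightarrow> rc a ! k = (\<not> a ! (length a - Suc k))"
  by (simp add: rc_def rev_nth)

lemma height_rc: "i \<le> length a \<Longrightarrow> height (rc a) i = height a (length a - i) - height a (length a)"
proof (induction i)
  case 0 then show ?case by simp
next
  case (Suc i)
  define L where "L = length a"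
  have i: "i < L" using Suc.prems by (simp add: L_def)
  have e: "L - i = Suc (L - Suc i)" using i by simp
  have "height a (L - i) = height a (L - Suc i) + (if a!(L - Suc i) then 1 else -1)"
    using i e by (simp add: height_Suc L_def)
  moreover have "height (rc a) (Suc i) = height (rc a) i + (if rc a ! i then 1 else -1)"
    using i by (simp add: height_Suc L_def)
  moreover have "rc a ! i = (\<not> a!(L - Suc i))" using i by (simp add: rc_nth L_def)
  ultimately show ?case using Suc.IH i by (simp add: L_def)
qed

lemma rc_dyck: assumes a: "a \<in> dyck_paths n" shows "rc a \<in> dyck_paths n"
proof -
  have l: "length a = 2*n" and nn: "\<forall>i\<le>length a. height a i \<ge> 0" and z: "height a (length a) = 0"
    using a by (auto simp: dyck_paths_def)
  show ?thesis unfolding dyck_paths_def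
    using l nn z by (auto simp: height_rc)
qed

lemma rc_image: "rc ` dyck_paths n = dyck_paths n"
proof
  show "rc ` dyck_paths n \<subseteq> dyck_paths n" using rc_dyck by blast
  show "dyck_paths n \<subseteq> rc ` dyck_paths n"
  proof
    fix a assume "a \<in> dyck_paths n"
    then show "a \<in> rc ` dyck_paths n" using rc_dyck rc_rc by (metis image_eqI)
  qed
qed

lemma inj_rc: "inj rc" by (metis injI rc_rc)

lemma ddu_rc: "card (ddu_set (rc a)) = card (duu_set a)"
proof -
  define L where "L = length a"
  have "ddu_set (rc a) = (\<lambda>k. L - 3 - k) ` duu_set a"
  proof (rule set_eqI)
    fix k
    show "k \<in> ddu_set (rc a) \<longleftrightarrow> k \<in> (\<lambda>k. L - 3 - k) ` duu_set a"
    proof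
      assume k: "k \<in> ddu_set (rc a)"
      then have k3: "k + 3 \<le> L" by (simp add: ddu_set_def L_def)
      have "L - 3 - k \<in> duu_set a" using k k3
        by (auto simp: ddu_set_def duu_set_def rc_nth L_def Suc_diff_Suc numeral_3_eq_3)
      moreover have "k = L - 3 - (L - 3 - k)" using k3 by simp
      ultimately show "k \<in> (\<lambda>k. L - 3 - k) ` duu_set a" by blast
    next
      assume "k \<in> (\<lambda>k. L - 3 - k) ` duu_set a"
      then obtain m where m: "m \<in> duu_set a" and km: "k = L - 3 - m" by blast
      have m3: "m + 3 \<le> L" using m by (simp add: duu_set_def L_def)
      show "k \<in> ddu_set (rc a)" using m m3 km
        by (auto simp: ddu_set_def duu_set_def rc_nth L_def Suc_diff_Suc numeral_3_eq_3)
    qed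
  qed
  moreover have "inj_on (\<lambda>k. L - 3 - k) (duu_set a)"
    by (rule inj_onI) (auto simp: duu_set_def L_def)
  ultimately show ?thesis by (simp add: card_image)
qed

lemma sym_sum: "(\<Sum>a\<in>dyck_paths n. card (ddu_set a)) = (\<Sum>a\<in>dyck_paths n. card (duu_set a))"
proof -
  have "(\<Sum>a\<in>dyck_paths n. card (ddu_set a)) = (\<Sum>a\<in>rc ` dyck_paths n. card (ddu_set a))"
    by (simp add: rc_image)
  also have "\<dots> = (\<Sum>a\<in>dyck_paths n. card (ddu_set (rc a)))"
    using sum.reindex[OF inj_on_subset[OF inj_rc subset_UNIV, of "dyck_paths n"], of "\<lambda>a. card (ddu_set a)"]
    by (simp add: comp_def)
  also have "\<dots> = (\<Sum>a\<in>dyck_paths n. card (duu_set a))" by (simp add: ddu_rc)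
  finally show ?thesis .
qed


lemma sc2_formula:
  "sc2 n = 2 * (\<Sum>a\<in>dyck_paths n. occ [dstep, ustep, ustep] a)
          + (\<Sum>a\<in>dyck_paths n. occ [dstep, ustep] a * (occ [dstep, ustep] a - 1))"
proof -
  have "sc2 n = (\<Sum>a\<in>dyck_paths n. card (vset a) * (card (vset a) - 1) + card (ddu_set a) + card (duu_set a))"
    by (simp add: sc2_sum inner_sum lft_card rgt_card)
  also have "\<dots> = (\<Sum>a\<in>dyck_paths n. card (vset a) * (card (vset a) - 1)) + (\<Sum>a\<in>dyck_paths n. card (ddu_set a)) + (\<Sum>a\<in>dyck_paths n. card (duu_set a))"
    by (simp add: sum.distrib)
  finally show ?thesis by (simp add: sym_sum occ_du occ_duu)
qed

lemma pderiv_sum': "pderiv (\<Sum>x\<in>A. f x) = (\<Sum>x\<in>A. pderiv (f x))"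
  by (induction A rule: infinite_finite_induct) (auto simp: pderiv_add)

theorem mainTheorem3:
  shows "SC2_gf = 2 * at_q1 (dq F_gf) + at_q1 (dq (dq V_gf))"
proof (rule fps_ext)
  fix n
  have F: "fps_nth (at_q1 (dq F_gf)) n = (\<Sum>a\<in>dyck_paths n. real (occ [dstep, ustep, ustep] a))"
    by (simp add: at_q1_def dq_def F_gf_def pderiv_sum' pderiv_monom poly_sum poly_monom)
  have V: "fps_nth (at_q1 (dq (dq V_gf))) n = (\<Sum>a\<in>dyck_paths n. real (occ [dstep, ustep] a * (occ [dstep, ustep] a - 1)))"
    by (simp add: at_q1_def dq_def V_gf_def pderiv_sum' pderiv_monom poly_sum poly_monom mult.commute)
  have "fps_nth (2 * at_q1 (dq F_gf)) n = 2 * fps_nth (at_q1 (dq F_gf)) n"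
    by (simp add: numeral_fps_const)
  then show "fps_nth SC2_gf n = fps_nth (2 * at_q1 (dq F_gf) + at_q1 (dq (dq V_gf))) n"
    using F V by (simp add: SC2_gf_def sc2_formula)
qed

end
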